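(* Let $\xi_1,\xi_2,\dots$ be i.i.d. random variables with $E\xi_i=0$ and $E\xi_i^2=\sigma^2<\infty$. Let $\epsilon>0$. Let $k^*=k^*(n)$ be natural numbers with $0<k^*<n$ and $\lim_{n\to\infty}k^*/n=0$, and for each $n$ let $J_{k^*}\subset J=\{1,\dots,n\}$ be any set of $k^*$ distinct indices. Then $$\frac{S_{J\setminus J_{k^*}}}{n^{1/2}(\log n)^{1/2+\epsilon}}\to0\quad\text{a.s.},$$ where $S_{J\setminus J_{k^*}}=\sum_{i\in J\setminus J_{k^*}}\xi_i$.
   Context: For each $n$, $J=\{1,2,\dots,n\}$ and $J_{k^*}$ is an arbitrary set of $k^*$ distinct elements of $J$, where $k^*$ is either a fixed natural number $k$ or a sequence $k(n)$. *)

theory Defs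
  imports "HOL-Probability.Probability"
begin

end

theory Submission imports Defs "HOL-Library.Discrete_Functions"
begin

definition trg :: "real \<Rightarrow> real \<Rightarrow> real" where "trg T y = (if \<bar>y\<bar> \<le> T then y else 0)"
definition trh :: "real \<Rightarrow> real \<Rightarrow> real" where "trh T y = (if \<bar>y\<bar> \<le> T then 0 else y)"

lemma trg_meas[measurable]: "trg T \<in> borel_measurable borel"
  unfolding trg_def by measurable
lemma trh_meas[measurable]: "trh T \<in> borel_measurable borel"
  unfolding trh_def by measurable
lemma trgh: "trg T y + trh T y = y" by (simp add: trg_def trh_def)

lemma exp_le_quad:
  fixes u :: real assumes "\<bar>u\<bar> \<le> 1" shows "exp u \<le> 1 + u + u\<^sup>2"
proof (cases "u \<ge> 0")
  case True then show ?thesis using exp_bound[of u] assms by auto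
next
  case False
  define y where "y = -u"
  have y: "0 < y" "y \<le> 1" using False assms by (auto simp: y_def)
  have "1 + y \<le> exp y" by simp
  have "exp u * exp y = 1" by (simp add: y_def flip: exp_add)
  have "(1 + u + u\<^sup>2) * (1 + y) = 1 + y^3" by (simp add: y_def power2_eq_square power3_eq_cube algebra_simps)
  hence "(1 + u + u\<^sup>2) * (1 + y) \<ge> 1" using y by simp
  have "1 + u + u\<^sup>2 = (u + 1/2)\<^sup>2 + 3/4" by (simp add: power2_eq_square algebra_simps)
  then have nn: "0 \<le> 1 + u + u\<^sup>2" using zero_le_power2[of "u + 1/2"] by linarith
  have "(1 + u + u\<^sup>2) * (1 + y) \<le> (1 + u + u\<^sup>2) * exp y"
    by (rule mult_left_mono[OF \<open>1 + y \<le> exp y\<close> nn])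
  with \<open>(1 + u + u\<^sup>2) * (1 + y) \<ge> 1\<close> have "exp u * exp y \<le> (1 + u + u\<^sup>2) * exp y"
    using \<open>exp u * exp y = 1\<close> by linarith
  then show ?thesis by simp
qed

context prob_space begin

lemma mgf_bound:
  fixes X :: "'a \<Rightarrow> real"
  assumes X[measurable]: "X \<in> borel_measurable M" and bnd: "\<And>x. x \<in> space M \<Longrightarrow> \<bar>X x\<bar> \<le> b"
    and b: "b > 0" and m0: "expectation X = 0" and v: "expectation (\<lambda>x. (X x)\<^sup>2) \<le> v"
  shows "(\<integral>\<^sup>+x. ennreal (exp (X x / b)) \<partial>M) \<le> ennreal (exp (v / b\<^sup>2))"
proof -
  have iX: "integrable M X"
    by (rule integrable_const_bound[where B=b]) (use bnd in auto)
  have iX2: "integrable M (\<lambda>x. (X x)\<^sup>2)"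
    by (rule integrable_const_bound[where B="b\<^sup>2"])
       (use bnd b in \<open>auto intro!: AE_I2 simp: abs_le_square_iff[symmetric]\<close>)
  have ie: "integrable M (\<lambda>x. exp (X x / b))"
  proof (rule integrable_const_bound[where B="exp 1"])
    show "AE x in M. norm (exp (X x / b)) \<le> exp 1"
    proof (rule AE_I2)
      fix x assume "x \<in> space M"
      then have "X x \<le> b" using bnd[of x] by (simp add: abs_le_iff)
      then show "norm (exp (X x / b)) \<le> exp 1" using b by simp
    qed
  qed simp
  have pt: "exp (X x / b) \<le> 1 + X x / b + (X x)\<^sup>2 / b\<^sup>2" if "x \<in> space M" for x
  proof -
    have "\<bar>X x / b\<bar> \<le> 1" using bnd[OF that] b by (simp add: abs_div)
    from exp_le_quad[OF this] show ?thesis by (simp add: power_divide)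
  qed
  have "(\<integral>\<^sup>+x. ennreal (exp (X x / b)) \<partial>M) = ennreal (expectation (\<lambda>x. exp (X x / b)))"
    by (rule nn_integral_eq_integral[OF ie]) auto
  also have "expectation (\<lambda>x. exp (X x / b)) \<le> expectation (\<lambda>x. 1 + X x / b + (X x)\<^sup>2 / b\<^sup>2)"
    by (rule integral_mono[OF ie]) (use iX iX2 pt in auto)
  also have "\<dots> = 1 + expectation X / b + expectation (\<lambda>x. (X x)\<^sup>2) / b\<^sup>2"
    using iX iX2 by (simp add: prob_space)
  also have "\<dots> \<le> 1 + v / b\<^sup>2" using m0 v b by (simp add: divide_right_mono)
  also have "\<dots> \<le> exp (v / b\<^sup>2)" by simp
  finally show ?thesis by (simp add: ennreal_leI)
qed

lemma chernoff:
  fixes X :: "nat \<Rightarrow> 'a \<Rightarrow> real" and v b t :: real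
  assumes fin: "finite I" and indep: "indep_vars (\<lambda>_. borel) X I"
    and bnd: "\<And>i x. i \<in> I \<Longrightarrow> x \<in> space M \<Longrightarrow> \<bar>X i x\<bar> \<le> b" and b: "b > 0"
    and m0: "\<And>i. i \<in> I \<Longrightarrow> expectation (X i) = 0"
    and v: "\<And>i. i \<in> I \<Longrightarrow> expectation (\<lambda>x. (X i x)\<^sup>2) \<le> v"
  shows "prob {x\<in>space M. t \<le> (\<Sum>i\<in>I. X i x)} \<le> exp (card I * v / b\<^sup>2 - t / b)"
proof -
  have rv[measurable]: "X i \<in> borel_measurable M" if "i \<in> I" for i
    using indep that unfolding indep_vars_def by auto
  define l where "l = 1 / b"
  have l: "l > 0" using b by (simp add: l_def)
  have "ennreal (prob {x\<in>space M. t \<le> (\<Sum>i\<in>I. X i x)}) = emeasure M {x\<in>space M. t \<le> (\<Sum>i\<in>I. X i x)}"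
    by (simp add: emeasure_eq_measure)
  also have "\<dots> \<le> ennreal (exp (-l*t)) * (\<integral>\<^sup>+x. ennreal (exp (l * (\<Sum>i\<in>I. X i x))) * indicator (space M) x \<partial>M)"
    by (intro Chernoff_ineq_nn_integral_ge l) (auto intro!: borel_measurable_sum)
  also have "(\<integral>\<^sup>+x. ennreal (exp (l * (\<Sum>i\<in>I. X i x))) * indicator (space M) x \<partial>M)
      = (\<integral>\<^sup>+x. (\<Prod>i\<in>I. ennreal (exp (X i x / b))) \<partial>M)"
    by (intro nn_integral_cong)
       (simp_all add: sum_distrib_left exp_sum fin prod_ennreal l_def)
  also have "\<dots> = (\<Prod>i\<in>I. \<integral>\<^sup>+x. ennreal (exp (X i x / b)) \<partial>M)"
    by (intro indep_vars_nn_integral fin indep_vars_compose2[OF indep]) auto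
  also have "ennreal (exp (-l * t)) * \<dots> \<le> ennreal (exp (-l * t)) * (\<Prod>i\<in>I. ennreal (exp (v / b\<^sup>2)))"
  proof (intro mult_left_mono prod_mono_ennreal)
    fix i assume i: "i \<in> I"
    show "(\<integral>\<^sup>+x. ennreal (exp (X i x / b)) \<partial>M) \<le> ennreal (exp (v / b\<^sup>2))"
      by (rule mgf_bound) (use i bnd b m0 v rv in auto)
  qed auto
  also have "\<dots> = ennreal (exp (-l * t) * (\<Prod>i\<in>I. exp (v / b\<^sup>2)))"
    by (subst ennreal_mult) (auto simp: ennreal_power)
  also have "exp (-l * t) * (\<Prod>i\<in>I. exp (v / b\<^sup>2)) = exp (card I * v / b\<^sup>2 - t / b)"
    by (simp add: exp_diff exp_minus fin l_def field_simps flip: exp_sum exp_of_nat_mult)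
  finally show ?thesis
    by (subst (asm) ennreal_le_iff) simp_all
qed


lemma sq_sum_indep:
  fixes X :: "nat \<Rightarrow> 'a \<Rightarrow> real"
  assumes fin: "finite I" and indep: "indep_vars (\<lambda>_. borel) X I"
    and int1: "\<And>i. i \<in> I \<Longrightarrow> integrable M (X i)"
    and int2: "\<And>i. i \<in> I \<Longrightarrow> integrable M (\<lambda>x. (X i x)\<^sup>2)"
    and m0: "\<And>i. i \<in> I \<Longrightarrow> expectation (X i) = 0"
  shows "integrable M (\<lambda>x. (\<Sum>i\<in>I. X i x)\<^sup>2)"
    "expectation (\<lambda>x. (\<Sum>i\<in>I. X i x)\<^sup>2) = (\<Sum>i\<in>I. expectation (\<lambda>x. (X i x)\<^sup>2))"
proof -
  have pr: "integrable M (\<lambda>x. X i x * X j x) \<and> expectation (\<lambda>x. X i x * X j x) = (if i = j then expectation (\<lambda>x. (X i x)\<^sup>2) else 0)"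
    if ij: "i \<in> I" "j \<in> I" for i j
  proof (cases "i = j")
    case True then show ?thesis using int2[OF ij(1)] by (simp add: power2_eq_square)
  next
    case False
    have ind2: "indep_vars (\<lambda>_. borel) X {i,j}" by (rule indep_vars_subset[OF indep]) (use ij in auto)
    have eq: "(\<lambda>x. X i x * X j x) = (\<lambda>x. \<Prod>k\<in>{i,j}. X k x)" using False by auto
    have i1: "integrable M (\<lambda>x. X i x * X j x)"
      unfolding eq by (rule indep_vars_integrable) (use ind2 int1 ij in auto)
    have e1: "expectation (\<lambda>x. X i x * X j x) = (\<Prod>k\<in>{i,j}. expectation (X k))"
      unfolding eq by (rule indep_vars_lebesgue_integral) (use ind2 int1 ij in auto)
    also have "\<dots> = expectation (X i) * expectation (X j)" using False by simp
    also have "\<dots> = 0" using m0[OF ij(1)] by simp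
    finally show ?thesis using i1 False by simp
  qed
  have pri: "integrable M (\<lambda>x. X i x * X j x)" if "i \<in> I" "j \<in> I" for i j
    using pr[OF that] by blast
  have sq: "(\<lambda>x. (\<Sum>i\<in>I. X i x)\<^sup>2) = (\<lambda>x. \<Sum>i\<in>I. \<Sum>j\<in>I. X i x * X j x)"
    by (simp add: power2_eq_square sum_product)
  have ii: "integrable M (\<lambda>x. \<Sum>j\<in>I. X i x * X j x)" if "i \<in> I" for i
    by (rule Bochner_Integration.integrable_sum) (rule pri[OF that])
  show "integrable M (\<lambda>x. (\<Sum>i\<in>I. X i x)\<^sup>2)"
    unfolding sq by (rule Bochner_Integration.integrable_sum) (rule ii)
  have "expectation (\<lambda>x. (\<Sum>i\<in>I. X i x)\<^sup>2) = (\<Sum>i\<in>I. expectation (\<lambda>x. \<Sum>j\<in>I. X i x * X j x))"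
    unfolding sq by (rule Bochner_Integration.integral_sum) (rule ii)
  also have "\<dots> = (\<Sum>i\<in>I. \<Sum>j\<in>I. expectation (\<lambda>x. X i x * X j x))"
  proof (rule sum.cong[OF refl])
    fix i assume "i \<in> I"
    show "expectation (\<lambda>x. \<Sum>j\<in>I. X i x * X j x) = (\<Sum>j\<in>I. expectation (\<lambda>x. X i x * X j x))"
      by (rule Bochner_Integration.integral_sum) (rule pri[OF \<open>i \<in> I\<close>])
  qed
  also have "\<dots> = (\<Sum>i\<in>I. \<Sum>j\<in>I. (if i = j then expectation (\<lambda>x. (X i x)\<^sup>2) else 0))"
    using pr by (intro sum.cong refl) auto
  also have "\<dots> = (\<Sum>i\<in>I. expectation (\<lambda>x. (X i x)\<^sup>2))"
    using fin by (simp add: sum.delta)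
  finally show "expectation (\<lambda>x. (\<Sum>i\<in>I. X i x)\<^sup>2) = (\<Sum>i\<in>I. expectation (\<lambda>x. (X i x)\<^sup>2))" .
qed

lemma cheb_sum:
  fixes X :: "nat \<Rightarrow> 'a \<Rightarrow> real"
  assumes fin: "finite I" and indep: "indep_vars (\<lambda>_. borel) X I"
    and int1: "\<And>i. i \<in> I \<Longrightarrow> integrable M (X i)"
    and int2: "\<And>i. i \<in> I \<Longrightarrow> integrable M (\<lambda>x. (X i x)\<^sup>2)"
    and m0: "\<And>i. i \<in> I \<Longrightarrow> expectation (X i) = 0" and c: "c > 0"
  shows "prob {x\<in>space M. c \<le> \<bar>\<Sum>i\<in>I. X i x\<bar>} \<le> (\<Sum>i\<in>I. expectation (\<lambda>x. (X i x)\<^sup>2)) / c\<^sup>2"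
proof -
  have rv[measurable]: "X i \<in> borel_measurable M" if "i \<in> I" for i
    using indep that unfolding indep_vars_def by auto
  have [measurable]: "(\<lambda>x. \<Sum>i\<in>I. X i x) \<in> borel_measurable M"
    by (intro borel_measurable_sum) auto
  have e0: "expectation (\<lambda>x. \<Sum>i\<in>I. X i x) = 0"
    using int1 m0 by (simp add: Bochner_Integration.integral_sum)
  have "prob {x\<in>space M. c \<le> \<bar>(\<Sum>i\<in>I. X i x) - expectation (\<lambda>x. \<Sum>i\<in>I. X i x)\<bar>}
     \<le> variance (\<lambda>x. \<Sum>i\<in>I. X i x) / c\<^sup>2"
    by (rule Chebyshev_inequality) (use sq_sum_indep(1)[OF assms(1-5)] c in auto)
  then show ?thesis using sq_sum_indep(2)[OF assms(1-5)] e0 by simp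
qed

end

lemma ln2_half: "ln (2::real) \<ge> 1/2"
proof -
  have "exp (1/2::real) \<le> 1 + 1/2 + (1/2)\<^sup>2"
    by (rule exp_bound) auto
  then have "exp (1/2::real) \<le> 2" by (simp add: power2_eq_square)
  then have "ln (exp (1/2::real)) \<le> ln 2" by (subst ln_le_cancel_iff) auto
  then show ?thesis by simp
qed

lemma asymn: fixes \<epsilon> C :: real assumes eps: "\<epsilon> > 0"
  shows "eventually (\<lambda>m::nat. C * sqrt (real m + 1) \<le> (real m / 2) powr (1/2+\<epsilon>)) sequentially"
proof -
  define K where "K = max 1 (2*C)"
  have K: "K \<ge> 1" "2 * C \<le> K" by (auto simp: K_def)
  obtain m0 :: nat where m0: "2 * K powr (1/\<epsilon>) \<le> real m0" using real_arch_simple by blast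
  show ?thesis
  proof (rule eventually_sequentiallyI[of "max m0 2"])
    fix m :: nat assume m: "max m0 2 \<le> m"
    define y where "y = real m / 2"
    have y1: "y \<ge> 1" using m by (simp add: y_def)
    have yK: "y \<ge> K powr (1/\<epsilon>)" using m m0 by (simp add: y_def)
    have "K = (K powr (1/\<epsilon>)) powr \<epsilon>" using K eps by (simp add: powr_powr)
    also have "\<dots> \<le> y powr \<epsilon>" by (rule powr_mono2) (use eps yK in auto)
    finally have Ky: "K \<le> y powr \<epsilon>" .
    have yp: "y powr (1/2+\<epsilon>) = sqrt y * y powr \<epsilon>"
      using y1 by (simp add: powr_add powr_half_sqrt)
    have "sqrt (real m + 1) \<le> sqrt (4 * y)" using m by (simp add: y_def)
    also have "\<dots> = 2 * sqrt y" by (simp add: real_sqrt_mult)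
    finally have s: "sqrt (real m + 1) \<le> 2 * sqrt y" .
    show "C * sqrt (real m + 1) \<le> (real m / 2) powr (1/2+\<epsilon>)"
    proof (cases "C \<le> 0")
      case True
      then have "C * sqrt (real m + 1) \<le> 0" by (simp add: mult_nonpos_nonneg)
      also have "0 \<le> (real m / 2) powr (1/2+\<epsilon>)" by simp
      finally show ?thesis .
    next
      case False
      have "C * sqrt (real m + 1) \<le> C * (2 * sqrt y)" using False s by (intro mult_left_mono) auto
      also have "\<dots> = (2 * C) * sqrt y" by (simp add: algebra_simps)
      also have "\<dots> \<le> K * sqrt y" by (rule mult_right_mono[OF K(2)]) (use y1 in simp)
      also have "\<dots> \<le> y powr \<epsilon> * sqrt y" by (rule mult_right_mono[OF Ky]) (use y1 in simp)
      finally show ?thesis using yp by (simp add: y_def mult.commute)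
    qed
  qed
qed


context prob_space begin

lemma trunc_facts:
  fixes Z :: "'a \<Rightarrow> real" and T s :: real
  assumes Zm[measurable]: "Z \<in> borel_measurable M" and iZ: "integrable M Z"
    and iZ2: "integrable M (\<lambda>x. (Z x)\<^sup>2)" and m0: "expectation Z = 0"
    and sv: "expectation (\<lambda>x. (Z x)\<^sup>2) = s" and T: "T > 0"
  shows "integrable M (\<lambda>x. trg T (Z x))" "integrable M (\<lambda>x. (trg T (Z x))\<^sup>2)"
    "integrable M (\<lambda>x. \<bar>trh T (Z x)\<bar>)" "integrable M (\<lambda>x. (\<bar>trh T (Z x)\<bar>)\<^sup>2)"
    "\<bar>expectation (\<lambda>x. trg T (Z x))\<bar> \<le> s / T"
    "expectation (\<lambda>x. \<bar>trh T (Z x)\<bar>) \<le> s / T"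
    "expectation (\<lambda>x. (trg T (Z x))\<^sup>2) \<le> s"
    "expectation (\<lambda>x. (\<bar>trh T (Z x)\<bar>)\<^sup>2) \<le> s"
proof -
  have p1: "\<bar>trh T y\<bar> \<le> y\<^sup>2 / T" for y
  proof (cases "\<bar>y\<bar> \<le> T")
    case False
    then have "T * \<bar>y\<bar> \<le> \<bar>y\<bar> * \<bar>y\<bar>" by (intro mult_right_mono) auto
    then show ?thesis using False T by (simp add: trh_def field_simps power2_eq_square)
  qed (simp add: trh_def)
  have p2: "(trg T y)\<^sup>2 \<le> y\<^sup>2" "(\<bar>trh T y\<bar>)\<^sup>2 \<le> y\<^sup>2" "\<bar>trg T y\<bar> \<le> \<bar>y\<bar>" "\<bar>trh T y\<bar> \<le> \<bar>y\<bar>" for y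
    by (auto simp: trg_def trh_def)
  show i1: "integrable M (\<lambda>x. trg T (Z x))"
    by (rule Bochner_Integration.integrable_bound[OF iZ]) (use p2 in auto)
  show i2: "integrable M (\<lambda>x. (trg T (Z x))\<^sup>2)"
    by (rule Bochner_Integration.integrable_bound[OF iZ2]) (use p2 in auto)
  show i3: "integrable M (\<lambda>x. \<bar>trh T (Z x)\<bar>)"
    by (rule Bochner_Integration.integrable_bound[OF iZ]) (use p2 in auto)
  show i4: "integrable M (\<lambda>x. (\<bar>trh T (Z x)\<bar>)\<^sup>2)"
    by (rule Bochner_Integration.integrable_bound[OF iZ2]) (use p2 in auto)
  have i5: "integrable M (\<lambda>x. trh T (Z x))"
    by (rule Bochner_Integration.integrable_bound[OF iZ]) (use p2 in auto)
  have "expectation (\<lambda>x. \<bar>trh T (Z x)\<bar>) \<le> expectation (\<lambda>x. (Z x)\<^sup>2 / T)"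
    by (rule integral_mono[OF i3]) (use iZ2 p1 in auto)
  also have "\<dots> = s / T" using sv by simp
  finally show e6: "expectation (\<lambda>x. \<bar>trh T (Z x)\<bar>) \<le> s / T" .
  have "expectation (\<lambda>x. trg T (Z x)) = expectation (\<lambda>x. Z x - trh T (Z x))"
    by (intro Bochner_Integration.integral_cong refl) (simp add: trg_def trh_def)
  also have "\<dots> = - expectation (\<lambda>x. trh T (Z x))"
    using iZ i5 m0 by simp
  finally have "\<bar>expectation (\<lambda>x. trg T (Z x))\<bar> = \<bar>expectation (\<lambda>x. trh T (Z x))\<bar>" by simp
  also have "\<dots> \<le> expectation (\<lambda>x. \<bar>trh T (Z x)\<bar>)"
  proof -
    have 1: "expectation (\<lambda>x. trh T (Z x)) \<le> expectation (\<lambda>x. \<bar>trh T (Z x)\<bar>)"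
      by (rule integral_mono[OF i5 i3]) simp
    have "expectation (\<lambda>x. - trh T (Z x)) \<le> expectation (\<lambda>x. \<bar>trh T (Z x)\<bar>)"
      by (rule integral_mono) (use i5 i3 in auto)
    then show ?thesis using 1 by simp
  qed
  finally show "\<bar>expectation (\<lambda>x. trg T (Z x))\<bar> \<le> s / T" using e6 by simp
  have "expectation (\<lambda>x. (trg T (Z x))\<^sup>2) \<le> expectation (\<lambda>x. (Z x)\<^sup>2)"
    by (rule integral_mono[OF i2 iZ2]) (rule p2)
  then show "expectation (\<lambda>x. (trg T (Z x))\<^sup>2) \<le> s" using sv by simp
  have "expectation (\<lambda>x. (\<bar>trh T (Z x)\<bar>)\<^sup>2) \<le> expectation (\<lambda>x. (Z x)\<^sup>2)"
    by (rule integral_mono[OF i4 iZ2]) (rule p2)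
  then show "expectation (\<lambda>x. (\<bar>trh T (Z x)\<bar>)\<^sup>2) \<le> s" using sv by simp
qed

lemma center:
  fixes Y :: "'a \<Rightarrow> real"
  assumes iY: "integrable M Y" and iY2: "integrable M (\<lambda>x. (Y x)\<^sup>2)"
  shows "expectation (\<lambda>x. Y x - expectation Y) = 0"
    "integrable M (\<lambda>x. Y x - expectation Y)"
    "integrable M (\<lambda>x. (Y x - expectation Y)\<^sup>2)"
    "expectation (\<lambda>x. (Y x - expectation Y)\<^sup>2) \<le> expectation (\<lambda>x. (Y x)\<^sup>2)"
proof -
  define c where "c = expectation Y"
  show "expectation (\<lambda>x. Y x - expectation Y) = 0" using iY by (simp add: prob_space)
  show "integrable M (\<lambda>x. Y x - expectation Y)" using iY by simp
  have eq: "(\<lambda>x. (Y x - c)\<^sup>2) = (\<lambda>x. (Y x)\<^sup>2 - 2 * c * Y x + c\<^sup>2)"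
    by (simp add: power2_diff algebra_simps)
  show "integrable M (\<lambda>x. (Y x - expectation Y)\<^sup>2)"
    using iY iY2 eq unfolding c_def[symmetric] by simp
  have "expectation (\<lambda>x. (Y x - c)\<^sup>2) = expectation (\<lambda>x. (Y x)\<^sup>2) - 2 * c * c + c\<^sup>2"
    unfolding eq using iY iY2 by (simp add: prob_space c_def)
  also have "\<dots> \<le> expectation (\<lambda>x. (Y x)\<^sup>2)" by (simp add: power2_eq_square)
  finally show "expectation (\<lambda>x. (Y x - expectation Y)\<^sup>2) \<le> expectation (\<lambda>x. (Y x)\<^sup>2)"
    by (simp add: c_def)
qed

lemma chernoff2:
  fixes X :: "nat \<Rightarrow> 'a \<Rightarrow> real" and v b t :: real
  assumes fin: "finite I" and indep: "indep_vars (\<lambda>_. borel) X I"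
    and bnd: "\<And>i x. i \<in> I \<Longrightarrow> x \<in> space M \<Longrightarrow> \<bar>X i x\<bar> \<le> b" and b: "b > 0"
    and m0: "\<And>i. i \<in> I \<Longrightarrow> expectation (X i) = 0"
    and v: "\<And>i. i \<in> I \<Longrightarrow> expectation (\<lambda>x. (X i x)\<^sup>2) \<le> v"
  shows "prob {x\<in>space M. t \<le> \<bar>\<Sum>i\<in>I. X i x\<bar>} \<le> 2 * exp (card I * v / b\<^sup>2 - t / b)"
proof -
  have rv[measurable]: "X i \<in> borel_measurable M" if "i \<in> I" for i
    using indep that unfolding indep_vars_def by auto
  have [measurable]: "(\<lambda>x. \<Sum>i\<in>I. X i x) \<in> borel_measurable M"
    by (intro borel_measurable_sum) auto
  have indep': "indep_vars (\<lambda>_. borel) (\<lambda>i x. - X i x) I"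
    using indep_vars_compose2[OF indep, where Y="\<lambda>i y. - y" and N="\<lambda>_. borel"] by auto
  have m0': "expectation (\<lambda>x. - X i x) = 0" if "i \<in> I" for i using m0[OF that] by simp
  have c1: "prob {x\<in>space M. t \<le> (\<Sum>i\<in>I. X i x)} \<le> exp (card I * v / b\<^sup>2 - t / b)"
    by (rule chernoff[OF fin indep bnd b m0 v])
  have c2: "prob {x\<in>space M. t \<le> (\<Sum>i\<in>I. - X i x)} \<le> exp (card I * v / b\<^sup>2 - t / b)"
    by (rule chernoff[OF fin indep' _ b m0']) (use bnd v in auto)
  have "{x\<in>space M. t \<le> \<bar>\<Sum>i\<in>I. X i x\<bar>} \<subseteq> {x\<in>space M. t \<le> (\<Sum>i\<in>I. X i x)} \<union> {x\<in>space M. t \<le> (\<Sum>i\<in>I. - X i x)}"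
    by (auto simp: sum_negf abs_if)
  then have "prob {x\<in>space M. t \<le> \<bar>\<Sum>i\<in>I. X i x\<bar>} \<le> prob ({x\<in>space M. t \<le> (\<Sum>i\<in>I. X i x)} \<union> {x\<in>space M. t \<le> (\<Sum>i\<in>I. - X i x)})"
    by (intro finite_measure_mono) (auto simp: sum_negf)
  also have "\<dots> \<le> prob {x\<in>space M. t \<le> (\<Sum>i\<in>I. X i x)} + prob {x\<in>space M. t \<le> (\<Sum>i\<in>I. - X i x)}"
    by (rule measure_Un_le) (auto simp: sum_negf)
  finally show ?thesis using c1 c2 by simp
qed

end

lemma a_lower:
  fixes n :: nat and p :: real assumes n: "n \<ge> 1" and p: "p \<ge> 0"
  shows "sqrt (2 ^ floor_log n) * (real (floor_log n) / 2) powr p \<le> real n powr (1/2) * ln (real n) powr p"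
proof -
  define m where "m = floor_log n"
  have N: "(2::nat) ^ m \<le> n" using floor_log_exp2_le[of n] n by (simp add: m_def)
  then have N': "(2::real) ^ m \<le> real n" by (metis of_nat_le_iff of_nat_numeral of_nat_power)
  have "real m * (1/2) \<le> real m * ln 2" by (rule mult_left_mono[OF ln2_half]) simp
  then have "real m / 2 \<le> real m * ln 2" by simp
  also have "\<dots> = ln ((2::real) ^ m)" by (simp add: ln_realpow)
  also have "\<dots> \<le> ln (real n)" using N' n by (subst ln_le_cancel_iff) auto
  finally have l: "real m / 2 \<le> ln (real n)" .
  have "real n powr (1/2) = sqrt (real n)" by (rule powr_half_sqrt) simp
  moreover have "sqrt (2 ^ m) \<le> sqrt (real n)" using N' by (rule real_sqrt_le_mono)
  ultimately have s1: "sqrt (2 ^ m) \<le> real n powr (1/2)" by simp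
  have s2: "(real m / 2) powr p \<le> ln (real n) powr p" by (rule powr_mono2) (use p l in auto)
  have "sqrt (2 ^ m) * (real m / 2) powr p \<le> real n powr (1/2) * ln (real n) powr p"
    by (rule mult_mono[OF s1 s2]) simp_all
  then show ?thesis by (simp only: m_def)
qed

lemma pow2_sq: "4 \<le> m \<Longrightarrow> m^2 \<le> (2::nat)^m"
proof (induct m rule: dec_induct)
  case base then show ?case by simp
next
  case (step n)
  have "4 * n \<le> n * n" using step(1) by simp
  then have "2 * n + 1 \<le> n * n" using step(1) by linarith
  then have "(Suc n)^2 \<le> 2 * n^2" by (simp add: power2_eq_square)
  also have "\<dots> \<le> 2 * 2^n" using step(3) by simp
  finally show ?case by simp
qed

lemma lin_exp: "eventually (\<lambda>m::nat. C * (real m + 1) \<le> 2^m) sequentially"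
proof -
  obtain M0 :: nat where M0: "max C 0 + 4 \<le> real M0" using real_arch_simple by blast
  show ?thesis
  proof (rule eventually_sequentiallyI[of M0])
    fix m assume m: "M0 \<le> m"
    have m4: "4 \<le> m" using M0 m by linarith
    have "real (m^2) \<le> real ((2::nat)^m)" using pow2_sq[OF m4] by (simp only: of_nat_le_iff)
    then have sq: "real m * real m \<le> 2^m" by (simp add: power2_eq_square)
    have "C * (real m + 1) \<le> max C 0 * (real m + 1)" by (intro mult_right_mono) auto
    also have "\<dots> \<le> (real m - 4) * (real m + 1)" using M0 m by (intro mult_right_mono) auto
    also have "(real m - 4) * (real m + 1) = real m * real m - 3 * real m - 4" by (simp add: algebra_simps)
    also have "\<dots> \<le> 2^m" using sq by linarith
    finally show "C * (real m + 1) \<le> 2^m" .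
  qed
qed

lemma floor_log_lim: "filterlim floor_log at_top sequentially"
  unfolding filterlim_at_top
proof
  fix Z :: nat
  show "eventually (\<lambda>n. Z \<le> floor_log n) sequentially"
  proof (rule eventually_sequentiallyI[of "2^Z"])
    fix n :: nat assume "2^Z \<le> n"
    then have "floor_log (2^Z) \<le> floor_log n" by (rule monoD[OF floor_log_mono])
    then show "Z \<le> floor_log n" by simp
  qed
qed

theorem theorem18:
  fixes M :: "'a measure" and \<xi> :: "nat \<Rightarrow> 'a \<Rightarrow> real"
    and \<sigma> \<epsilon> :: real and k :: "nat \<Rightarrow> nat" and Jk :: "nat \<Rightarrow> nat set"
  assumes "prob_space M"
    and "\<And>i. i \<ge> 1 \<Longrightarrow> \<xi> i \<in> borel_measurable M"
    and "prob_space.indep_vars M (\<lambda>_. borel) \<xi> {1..}"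
    and "\<And>i. i \<ge> 1 \<Longrightarrow> distr M borel (\<xi> i) = distr M borel (\<xi> 1)"
    and "\<And>i. i \<ge> 1 \<Longrightarrow> integrable M (\<xi> i)"
    and "\<And>i. i \<ge> 1 \<Longrightarrow> integrable M (\<lambda>x. (\<xi> i x)\<^sup>2)"
    and "\<And>i. i \<ge> 1 \<Longrightarrow> (\<integral>x. \<xi> i x \<partial>M) = 0"
    and "\<And>i. i \<ge> 1 \<Longrightarrow> (\<integral>x. (\<xi> i x)\<^sup>2 \<partial>M) = \<sigma>\<^sup>2"
    and "\<epsilon> > 0"
    and "\<And>n. n \<ge> 2 \<Longrightarrow> 0 < k n \<and> k n < n"
    and "(\<lambda>n. real (k n) / real n) \<longlonglongrightarrow> 0"
    and "\<And>n. Jk n \<subseteq> {1..n}"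
    and "\<And>n. card (Jk n) = k n"
  shows "AE x in M. (\<lambda>n. (\<Sum>i\<in>{1..n} - Jk n. \<xi> i x) /
            (real n powr (1/2) * ln (real n) powr (1/2 + \<epsilon>))) \<longlonglongrightarrow> 0"
proof -
  interpret P: prob_space M by (rule assms(1))
  define s where "s = \<sigma>\<^sup>2"
  have s0: "0 \<le> s" unfolding s_def by simp
  have meas: "\<And>i. 1 \<le> i \<Longrightarrow> \<xi> i \<in> borel_measurable M" using assms(2) by blast
  have i\<xi>: "\<And>i. 1 \<le> i \<Longrightarrow> integrable M (\<xi> i)" using assms(5) by blast
  have i\<xi>2: "\<And>i. 1 \<le> i \<Longrightarrow> integrable M (\<lambda>x. (\<xi> i x)\<^sup>2)" using assms(6) by blast
  have m\<xi>: "\<And>i. 1 \<le> i \<Longrightarrow> (\<integral>x. \<xi> i x \<partial>M) = 0" using assms(7) by blast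
  have v\<xi>: "\<And>i. 1 \<le> i \<Longrightarrow> (\<integral>x. (\<xi> i x)\<^sup>2 \<partial>M) = s" using assms(8) s_def by blast
  have TF: "integrable M (\<lambda>x. trg T (\<xi> i x))" "integrable M (\<lambda>x. (trg T (\<xi> i x))\<^sup>2)"
    "integrable M (\<lambda>x. \<bar>trh T (\<xi> i x)\<bar>)" "integrable M (\<lambda>x. (\<bar>trh T (\<xi> i x)\<bar>)\<^sup>2)"
    "\<bar>(\<integral>x. trg T (\<xi> i x) \<partial>M)\<bar> \<le> s / T"
    "(\<integral>x. \<bar>trh T (\<xi> i x)\<bar> \<partial>M) \<le> s / T"
    "(\<integral>x. (trg T (\<xi> i x))\<^sup>2 \<partial>M) \<le> s"
    "(\<integral>x. (\<bar>trh T (\<xi> i x)\<bar>)\<^sup>2 \<partial>M) \<le> s"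
    if i: "1 \<le> i" and T: "0 < T" for i T
    using P.trunc_facts[OF meas[OF i] i\<xi>[OF i] i\<xi>2[OF i] m\<xi>[OF i] v\<xi>[OF i] T] by auto
  define TT :: "nat \<Rightarrow> real" where "TT m = sqrt (2^m / (real m + 1))" for m
  define A where "A n = {1..n} - Jk n" for n
  define aa where "aa n = real n powr (1/2) * ln (real n) powr (1/2 + \<epsilon>)" for n :: nat
  define p where "p = 1/2 + \<epsilon>"
  have p0: "p > 1/2" using assms(9) by (simp add: p_def)
  have TTpos: "TT m > 0" for m by (simp add: TT_def)
  have TTsq: "(TT m)\<^sup>2 = 2^m / (real m + 1)" for m by (simp add: TT_def)
  have TTq: "sqrt (2^m) / TT m = sqrt (real m + 1)" for m
    by (simp add: TT_def real_sqrt_divide)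
  have sqN: "sqrt ((2::real)^m) * sqrt (2^m) = 2^m" for m by simp
  have blk: "(2::real)^floor_log n \<le> real n \<and> real n < 2 * 2^floor_log n" if "1 \<le> n" for n
  proof -
    have "(2::nat)^floor_log n \<le> n" using floor_log_exp2_le[of n] that by simp
    moreover have "n < 2 * (2::nat)^floor_log n" by (rule floor_log_exp2_gt)
    ultimately show ?thesis by (metis of_nat_le_iff of_nat_less_iff of_nat_mult of_nat_numeral of_nat_power)
  qed
  have A_sub: "A n \<subseteq> {1..n}" "finite (A n)" for n by (auto simp: A_def)
  have A_card: "real (card (A n)) \<le> real n" for n
  proof -
    have "card (A n) \<le> card {1..n}" by (rule card_mono) (auto simp: A_def)
    then show ?thesis by simp
  qed
  have aa_low: "sqrt (2^floor_log n) * (real (floor_log n) / 2) powr p \<le> aa n" if "1 \<le> n" for n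
    using a_lower[OF that, of p] p0 by (simp add: aa_def p_def)
  have aa_pos: "0 < aa n" if "2 \<le> n" for n
  proof -
    have "0 < ln (real n)" using that by simp
    then show ?thesis using that by (simp add: aa_def)
  qed
  define S where "S n x = (\<Sum>i\<in>A n. \<xi> i x)" for n x
  have key: "AE x in M. eventually (\<lambda>n. \<bar>S n x\<bar> \<le> 3 * \<delta> * aa n) sequentially" if \<delta>: "\<delta> > 0" for \<delta>
  proof -
    define U where "U n i x = trg (TT (floor_log n)) (\<xi> i x) - (\<integral>x. trg (TT (floor_log n)) (\<xi> i x) \<partial>M)" for n i x
    define E1 where "E1 n = {x \<in> space M. \<delta> * aa n \<le> \<bar>\<Sum>i\<in>A n. U n i x\<bar>}" for n
    define W where "W m i x = \<bar>trh (TT m) (\<xi> i x)\<bar> - (\<integral>x. \<bar>trh (TT m) (\<xi> i x)\<bar> \<partial>M)" for m i x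
    define B where "B m = {1..2*2^m::nat}" for m
    define c where "c m = \<delta> * sqrt (2^m) * (real m / 2) powr p" for m
    define E2 where "E2 m = {x \<in> space M. c m \<le> \<bar>\<Sum>i\<in>B m. W m i x\<bar>}" for m
    have Um: "U n i \<in> borel_measurable M" if "1 \<le> i" for n i
      unfolding U_def using meas[OF that] by measurable
    have Wm: "W m i \<in> borel_measurable M" if "1 \<le> i" for m i
      unfolding W_def using meas[OF that] by measurable
    have E1m: "E1 n \<in> sets M" for n
    proof -
      have [measurable]: "(\<lambda>x. \<Sum>i\<in>A n. U n i x) \<in> borel_measurable M"
        by (intro borel_measurable_sum Um) (auto simp: A_def)
      show ?thesis unfolding E1_def by measurable
    qed
    have E2m: "E2 m \<in> sets M" for m
    proof -
      have [measurable]: "(\<lambda>x. \<Sum>i\<in>B m. W m i x) \<in> borel_measurable M"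
        by (intro borel_measurable_sum Wm) (auto simp: B_def)
      show ?thesis unfolding E2_def by measurable
    qed
    have ev_m: "eventually (\<lambda>m. s * (real m + 1) \<le> 2^m \<and>
        (s + 4) * sqrt (real m + 1) \<le> \<delta> * (real m / 2) powr p \<and>
        4 * s * sqrt (real m + 1) \<le> \<delta> * (real m / 2) powr p) sequentially"
    proof -
      have 1: "eventually (\<lambda>m. s * (real m + 1) \<le> 2^m) sequentially" by (rule lin_exp)
      have 2: "eventually (\<lambda>m::nat. (s + 4) / \<delta> * sqrt (real m + 1) \<le> (real m / 2) powr p) sequentially"
        unfolding p_def by (rule asymn[OF assms(9)])
      have 3: "eventually (\<lambda>m::nat. (4 * s) / \<delta> * sqrt (real m + 1) \<le> (real m / 2) powr p) sequentially"
        unfolding p_def by (rule asymn[OF assms(9)])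
      show ?thesis using 1 2 3
      proof eventually_elim
        case (elim m)
        have "(s + 4) * sqrt (real m + 1) = \<delta> * ((s + 4) / \<delta> * sqrt (real m + 1))" using \<delta> by simp
        also have "\<dots> \<le> \<delta> * (real m / 2) powr p" using elim(2) \<delta> by (intro mult_left_mono) auto
        finally have a: "(s + 4) * sqrt (real m + 1) \<le> \<delta> * (real m / 2) powr p" .
        have "4 * s * sqrt (real m + 1) = \<delta> * ((4 * s) / \<delta> * sqrt (real m + 1))" using \<delta> by simp
        also have "\<dots> \<le> \<delta> * (real m / 2) powr p" using elim(3) \<delta> by (intro mult_left_mono) auto
        finally show ?case using a elim(1) by simp
      qed
    qed
    have ev_n: "eventually (\<lambda>n. 2 \<le> n \<and> s * (real (floor_log n) + 1) \<le> 2^floor_log n \<and>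
        (s + 4) * sqrt (real (floor_log n) + 1) \<le> \<delta> * (real (floor_log n) / 2) powr p \<and>
        4 * s * sqrt (real (floor_log n) + 1) \<le> \<delta> * (real (floor_log n) / 2) powr p) sequentially"
      using eventually_compose_filterlim[OF ev_m floor_log_lim] eventually_ge_at_top[of "2::nat"]
      by eventually_elim auto
    have P1: "measure M (E1 n) \<le> 2 * inverse (real n ^ 2)"
      if n2: "2 \<le> n" and c1: "s * (real (floor_log n) + 1) \<le> 2^floor_log n"
        and c2: "(s + 4) * sqrt (real (floor_log n) + 1) \<le> \<delta> * (real (floor_log n) / 2) powr p" for n
    proof -
      define m where "m = floor_log n"
      define T where "T = TT m"
      define N :: real where "N = 2^m"
      have T0: "T > 0" by (simp add: T_def TTpos)
      have Nn: "N \<le> real n" "real n < 2 * N" using blk[of n] n2 by (auto simp: N_def m_def)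
      have N0: "N > 0" by (simp add: N_def)
      have Tsq: "T\<^sup>2 = N / (real m + 1)" by (simp add: T_def N_def TTsq)
      have sT2: "s \<le> T\<^sup>2" using c1 by (simp add: Tsq N_def m_def field_simps)
      have sT: "s / T \<le> T" using sT2 T0 by (simp add: divide_le_eq power2_eq_square)
      have indA: "P.indep_vars (\<lambda>_. borel) \<xi> (A n)"
        by (rule P.indep_vars_subset[OF assms(3)]) (auto simp: A_def)
      have Ueq: "U n = (\<lambda>i x. trg T (\<xi> i x) - (\<integral>x. trg T (\<xi> i x) \<partial>M))"
        by (simp add: fun_eq_iff U_def T_def m_def)
      have indU: "P.indep_vars (\<lambda>_. borel) (U n) (A n)"
        unfolding Ueq
        using P.indep_vars_compose2[OF indA, where Y="\<lambda>i y. trg T y - (\<integral>x. trg T (\<xi> i x) \<partial>M)" and N="\<lambda>_. borel"]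
        by simp
      have iA: "1 \<le> i" if "i \<in> A n" for i using that by (auto simp: A_def)
      have bnd: "\<bar>U n i x\<bar> \<le> 2 * T" if "i \<in> A n" for i x
      proof -
        have "\<bar>trg T (\<xi> i x)\<bar> \<le> T" using T0 by (simp add: trg_def)
        moreover have "\<bar>(\<integral>x. trg T (\<xi> i x) \<partial>M)\<bar> \<le> T" using TF(5)[OF iA[OF that] T0] sT by linarith
        ultimately show ?thesis by (simp add: U_def T_def m_def)
      qed
      have mU: "(\<integral>x. U n i x \<partial>M) = 0" if "i \<in> A n" for i
        using P.center(1)[OF TF(1,2)[OF iA[OF that] T0]] by (simp add: U_def T_def m_def)
      have vU: "(\<integral>x. (U n i x)\<^sup>2 \<partial>M) \<le> s" if "i \<in> A n" for i
        using P.center(4)[OF TF(1,2)[OF iA[OF that] T0]] TF(7)[OF iA[OF that] T0]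
        by (simp add: U_def T_def m_def)
      have ch: "measure M (E1 n) \<le> 2 * exp (card (A n) * s / (2 * T)\<^sup>2 - \<delta> * aa n / (2 * T))"
        unfolding E1_def using P.chernoff2[OF A_sub(2) indU bnd _ mU vU] T0 by simp
      have e1: "card (A n) * s / (2 * T)\<^sup>2 \<le> s * (real m + 1) / 2"
      proof -
        have "card (A n) * s \<le> (2 * N) * s" using A_card[of n] Nn s0 by (intro mult_right_mono) auto
        then have "card (A n) * s / (2 * T)\<^sup>2 \<le> (2 * N) * s / (2 * T)\<^sup>2"
          using T0 by (intro divide_right_mono) auto
        also have "(2 * N) * s / (2 * T)\<^sup>2 = s * (real m + 1) / 2"
          using N0 by (simp add: power_mult_distrib Tsq field_simps)
        finally show ?thesis .
      qed
      have e2: "(s + 4) * (real m + 1) / 2 \<le> \<delta> * aa n / (2 * T)"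
      proof -
        have sq1: "sqrt (real m + 1) * sqrt (real m + 1) = real m + 1" by simp
        have "(s + 4) * (real m + 1) / 2 = (s + 4) * sqrt (real m + 1) * sqrt (real m + 1) / 2"
          using sq1 by (simp add: mult.assoc)
        also have "\<dots> \<le> \<delta> * (real m / 2) powr p * sqrt (real m + 1) / 2"
          using c2 by (intro divide_right_mono mult_right_mono) (auto simp: m_def)
        also have "\<delta> * (real m / 2) powr p * sqrt (real m + 1) / 2 = \<delta> * (sqrt N * (real m / 2) powr p) / (2 * T)"
          using TTq[of m] T0 by (simp add: T_def N_def field_simps)
        also have "\<dots> \<le> \<delta> * aa n / (2 * T)"
          using aa_low[of n] n2 \<delta> T0 by (intro divide_right_mono mult_left_mono) (auto simp: N_def m_def)
        finally show ?thesis .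
      qed
      have lnn: "ln (real n) \<le> real m + 1"
      proof -
        have "ln (real n) \<le> ln (2 * N)" using Nn n2 by (subst ln_le_cancel_iff) auto
        also have "\<dots> = (real m + 1) * ln 2" by (simp add: N_def ln_mult ln_realpow algebra_simps)
        also have "\<dots> \<le> (real m + 1) * 1" using ln_2_less_1 by (intro mult_left_mono) auto
        finally show ?thesis by simp
      qed
      have "card (A n) * s / (2 * T)\<^sup>2 - \<delta> * aa n / (2 * T) \<le> - 2 * ln (real n)"
        using e1 e2 lnn by (simp add: algebra_simps)
      then have "exp (card (A n) * s / (2 * T)\<^sup>2 - \<delta> * aa n / (2 * T)) \<le> exp (- 2 * ln (real n))" by simp
      also have "exp (- 2 * ln (real n)) = inverse (real n ^ 2)"
      proof -
        have l2: "2 * ln (real n) = ln (real n ^ 2)" using n2 by (simp add: ln_realpow)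
        have "exp (- 2 * ln (real n)) = inverse (exp (2 * ln (real n)))" by (simp add: exp_minus)
        also have "exp (2 * ln (real n)) = real n ^ 2" unfolding l2 using n2 by (subst exp_ln) auto
        finally show ?thesis .
      qed
      finally show ?thesis using ch by simp
    qed
    have sum1: "summable (\<lambda>n. measure M (E1 n))"
    proof -
      obtain N0 where N0: "\<And>n. N0 \<le> n \<Longrightarrow> 2 \<le> n \<and> s * (real (floor_log n) + 1) \<le> 2^floor_log n \<and>
        (s + 4) * sqrt (real (floor_log n) + 1) \<le> \<delta> * (real (floor_log n) / 2) powr p"
        using ev_n unfolding eventually_sequentially by blast
      show ?thesis
      proof (rule summable_comparison_test')
        show "summable (\<lambda>n. 2 * inverse (real n ^ 2))"
          by (intro summable_mult inverse_power_summable) auto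
        show "norm (measure M (E1 n)) \<le> 2 * inverse (real n ^ 2)" if "N0 \<le> n" for n
          using P1 N0[OF that] by simp
      qed
    qed
    have bc1: "AE x in M. eventually (\<lambda>n. x \<in> space M - E1 n) sequentially"
      by (rule borel_cantelli_AE1) (use E1m sum1 in \<open>auto simp: P.emeasure_eq_measure\<close>)
    have P2: "measure M (E2 m) \<le> (2 * s / \<delta>\<^sup>2 * 2 powr (2 * p)) * real m powr (- (2 * p))"
      if m1: "1 \<le> m" for m
    proof -
      define T where "T = TT m"
      define N :: real where "N = 2^m"
      have T0: "T > 0" by (simp add: T_def TTpos)
      have N0: "N > 0" by (simp add: N_def)
      have iB: "1 \<le> i" if "i \<in> B m" for i using that by (auto simp: B_def)
      have indB: "P.indep_vars (\<lambda>_. borel) \<xi> (B m)"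
        by (rule P.indep_vars_subset[OF assms(3)]) (auto simp: B_def)
      have Weq: "W m = (\<lambda>i x. \<bar>trh T (\<xi> i x)\<bar> - (\<integral>x. \<bar>trh T (\<xi> i x)\<bar> \<partial>M))"
        by (simp add: fun_eq_iff W_def T_def)
      have indW: "P.indep_vars (\<lambda>_. borel) (W m) (B m)"
        unfolding Weq
        using P.indep_vars_compose2[OF indB, where Y="\<lambda>i y. \<bar>trh T y\<bar> - (\<integral>x. \<bar>trh T (\<xi> i x)\<bar> \<partial>M)" and N="\<lambda>_. borel"]
        by simp
      have c0: "c m > 0" using m1 \<delta> by (simp add: c_def)
      have cb: "measure M (E2 m) \<le> (\<Sum>i\<in>B m. (\<integral>x. (W m i x)\<^sup>2 \<partial>M)) / (c m)\<^sup>2"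
        unfolding E2_def
      proof (rule P.cheb_sum[OF _ indW _ _ _ c0])
        show "finite (B m)" by (simp add: B_def)
        show "integrable M (W m i)" if "i \<in> B m" for i
          using P.center(2)[OF TF(3,4)[OF iB[OF that] T0]] by (simp add: Weq)
        show "integrable M (\<lambda>x. (W m i x)\<^sup>2)" if "i \<in> B m" for i
          using P.center(3)[OF TF(3,4)[OF iB[OF that] T0]] by (simp add: Weq)
        show "(\<integral>x. W m i x \<partial>M) = 0" if "i \<in> B m" for i
          using P.center(1)[OF TF(3,4)[OF iB[OF that] T0]] by (simp add: Weq)
      qed
      have "(\<Sum>i\<in>B m. (\<integral>x. (W m i x)\<^sup>2 \<partial>M)) \<le> (\<Sum>i\<in>B m. s)"
      proof (rule sum_mono)
        fix i assume i: "i \<in> B m"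
        show "(\<integral>x. (W m i x)\<^sup>2 \<partial>M) \<le> s"
          using P.center(4)[OF TF(3,4)[OF iB[OF i] T0]] TF(8)[OF iB[OF i] T0]
          by (simp add: Weq)
      qed
      also have "(\<Sum>i\<in>B m. s) = 2 * N * s" by (simp add: B_def N_def)
      finally have sb: "(\<Sum>i\<in>B m. (\<integral>x. (W m i x)\<^sup>2 \<partial>M)) \<le> 2 * N * s" .
      have pw: "(real m / 2) powr p > 0" using m1 by simp
      have q: "((real m / 2) powr p)\<^sup>2 = (real m / 2) powr (2 * p)"
        by (simp only: power2_eq_square powr_add[symmetric] mult_2)
      have csq: "(c m)\<^sup>2 = \<delta>\<^sup>2 * N * (real m / 2) powr (2 * p)"
        unfolding c_def power_mult_distrib q by (simp add: N_def)
      have "measure M (E2 m) \<le> (\<Sum>i\<in>B m. (\<integral>x. (W m i x)\<^sup>2 \<partial>M)) / (c m)\<^sup>2" by (rule cb)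
      also have "\<dots> \<le> 2 * N * s / (c m)\<^sup>2" by (rule divide_right_mono[OF sb]) simp
      also have "2 * N * s / (c m)\<^sup>2 = (2 * s / \<delta>\<^sup>2) / (real m / 2) powr (2 * p)"
        using N0 \<delta> pw by (simp add: csq field_simps)
      also have "(real m / 2) powr (2 * p) = real m powr (2 * p) / 2 powr (2 * p)"
        by (simp add: powr_divide)
      also have "(2 * s / \<delta>\<^sup>2) / (real m powr (2 * p) / 2 powr (2 * p)) = (2 * s / \<delta>\<^sup>2 * 2 powr (2 * p)) * real m powr (- (2 * p))"
        using m1 by (simp add: powr_minus field_simps)
      finally show ?thesis .
    qed
    have sum2: "summable (\<lambda>m. measure M (E2 m))"
    proof (rule summable_comparison_test')
      show "summable (\<lambda>m. (2 * s / \<delta>\<^sup>2 * 2 powr (2 * p)) * real m powr (- (2 * p)))"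
        using p0 by (intro summable_mult) (simp add: summable_real_powr_iff)
      show "norm (measure M (E2 m)) \<le> (2 * s / \<delta>\<^sup>2 * 2 powr (2 * p)) * real m powr (- (2 * p))"
        if "1 \<le> m" for m using P2[OF that] by simp
    qed
    have bc2: "AE x in M. eventually (\<lambda>m. x \<in> space M - E2 m) sequentially"
      by (rule borel_cantelli_AE1) (use E2m sum2 in \<open>auto simp: P.emeasure_eq_measure\<close>)
    show ?thesis using bc1 bc2
    proof eventually_elim
      case (elim x)
      have e2: "eventually (\<lambda>n. x \<in> space M - E2 (floor_log n)) sequentially"
        by (rule eventually_compose_filterlim[OF elim(2) floor_log_lim])
      show ?case using elim(1) e2 ev_n
      proof eventually_elim
        case (elim n)
        define m where "m = floor_log n"
        define T where "T = TT m"
        define N :: real where "N = 2^m"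
        have n2: "2 \<le> n" using elim(3) by simp
        have T0: "T > 0" by (simp add: T_def TTpos)
        have Nn: "N \<le> real n" "real n < 2 * N" using blk[of n] n2 by (auto simp: N_def m_def)
        have x: "x \<in> space M" using elim(1) by simp
        have NT: "N / T = sqrt N * sqrt (real m + 1)"
        proof -
          have "N / T = (sqrt N * sqrt N) / T" by (simp add: N_def)
          also have "\<dots> = sqrt N * (sqrt N / T)" by simp
          also have "sqrt N / T = sqrt (real m + 1)" using TTq[of m] by (simp add: N_def T_def)
          finally show ?thesis .
        qed
        define Eg where "Eg i = (\<integral>x. trg T (\<xi> i x) \<partial>M)" for i
        have dec: "S n x = (\<Sum>i\<in>A n. U n i x) + (\<Sum>i\<in>A n. Eg i) + (\<Sum>i\<in>A n. trh T (\<xi> i x))"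
          unfolding S_def by (simp add: U_def Eg_def T_def m_def trgh flip: sum.distrib)
        have t1: "\<bar>\<Sum>i\<in>A n. U n i x\<bar> < \<delta> * aa n" using elim(1) x by (auto simp: E1_def)
        have t2: "\<bar>\<Sum>i\<in>A n. Eg i\<bar> \<le> 2 * s * (sqrt N * sqrt (real m + 1))"
        proof -
          have "\<bar>\<Sum>i\<in>A n. Eg i\<bar> \<le> (\<Sum>i\<in>A n. \<bar>Eg i\<bar>)" by (rule sum_abs)
          also have "\<dots> \<le> (\<Sum>i\<in>A n. s / T)"
            by (rule sum_mono) (use TF(5) T0 in \<open>auto simp: Eg_def A_def\<close>)
          also have "\<dots> = card (A n) * (s / T)" by simp
          also have "\<dots> \<le> (2 * N) * (s / T)"
            using A_card[of n] Nn s0 T0 by (intro mult_right_mono) auto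
          also have "\<dots> = 2 * s * (N / T)" by simp
          finally show ?thesis using NT by simp
        qed
        have t3: "\<bar>\<Sum>i\<in>A n. trh T (\<xi> i x)\<bar> < c m + 2 * s * (sqrt N * sqrt (real m + 1))"
        proof -
          have AB: "A n \<subseteq> B m"
          proof
            fix i assume "i \<in> A n"
            then have "1 \<le> i" "real i \<le> real n" by (auto simp: A_def)
            with Nn have "real i < 2 * 2 ^ m" by (simp add: N_def)
            then have "i < 2 * 2 ^ m" by (metis of_nat_less_iff of_nat_mult of_nat_numeral of_nat_power)
            with \<open>1 \<le> i\<close> show "i \<in> B m" by (simp add: B_def)
          qed
          have "\<bar>\<Sum>i\<in>A n. trh T (\<xi> i x)\<bar> \<le> (\<Sum>i\<in>A n. \<bar>trh T (\<xi> i x)\<bar>)" by (rule sum_abs)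
          also have "\<dots> \<le> (\<Sum>i\<in>B m. \<bar>trh T (\<xi> i x)\<bar>)"
            by (rule sum_mono2) (use AB in \<open>auto simp: B_def\<close>)
          also have "\<dots> = (\<Sum>i\<in>B m. W m i x) + (\<Sum>i\<in>B m. (\<integral>x. \<bar>trh T (\<xi> i x)\<bar> \<partial>M))"
            by (simp add: W_def T_def flip: sum.distrib)
          also have "(\<Sum>i\<in>B m. W m i x) < c m"
            using elim(2) x by (auto simp: E2_def m_def)
          also have "(\<Sum>i\<in>B m. (\<integral>x. \<bar>trh T (\<xi> i x)\<bar> \<partial>M)) \<le> (\<Sum>i\<in>B m. s / T)"
            by (rule sum_mono) (use TF(6) T0 in \<open>auto simp: B_def\<close>)
          also have "(\<Sum>i\<in>B m. s / T) = 2 * s * (N / T)" by (simp add: B_def N_def)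
          finally show ?thesis using NT by simp
        qed
        have low: "sqrt N * (real m / 2) powr p \<le> aa n" using aa_low[of n] n2 by (simp add: N_def m_def)
        have t4: "c m \<le> \<delta> * aa n"
          using low \<delta> by (simp add: c_def N_def mult.assoc mult_left_mono)
        have t5: "4 * s * (sqrt N * sqrt (real m + 1)) \<le> \<delta> * aa n"
        proof -
          have "4 * s * (sqrt N * sqrt (real m + 1)) = sqrt N * (4 * s * sqrt (real m + 1))" by simp
          also have "\<dots> \<le> sqrt N * (\<delta> * (real m / 2) powr p)"
            using elim(3) by (intro mult_left_mono) (auto simp: m_def N_def)
          also have "\<dots> = \<delta> * (sqrt N * (real m / 2) powr p)" by simp
          also have "\<dots> \<le> \<delta> * aa n" using low \<delta> by (intro mult_left_mono) auto
          finally show ?thesis .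
        qed
        have "\<bar>S n x\<bar> \<le> \<bar>\<Sum>i\<in>A n. U n i x\<bar> + \<bar>\<Sum>i\<in>A n. Eg i\<bar> + \<bar>\<Sum>i\<in>A n. trh T (\<xi> i x)\<bar>"
          unfolding dec by linarith
        then show ?case using t1 t2 t3 t4 t5 by linarith
      qed
    qed
  qed
  have "AE x in M. \<forall>j::nat. eventually (\<lambda>n. \<bar>S n x\<bar> \<le> 3 * (1 / real (Suc j)) * aa n) sequentially"
    unfolding AE_all_countable by (intro allI key) simp
  then show ?thesis
  proof (rule eventually_mono)
    fix x assume H: "\<forall>j::nat. eventually (\<lambda>n. \<bar>S n x\<bar> \<le> 3 * (1 / real (Suc j)) * aa n) sequentially"
    show "(\<lambda>n. (\<Sum>i\<in>{1..n} - Jk n. \<xi> i x) / (real n powr (1/2) * ln (real n) powr (1/2 + \<epsilon>))) \<longlonglongrightarrow> 0"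
    proof (rule LIMSEQ_I)
      fix r :: real assume r: "0 < r"
      obtain j0 :: nat where j0: "0 < j0" "inverse (real j0) < r / 3" using ex_inverse_of_nat_less[of "r/3"] r by auto
      define j where "j = j0 - 1"
      have j: "3 * (1 / real (Suc j)) < r" using j0 by (simp add: j_def field_simps)
      obtain n0 where n0: "\<And>n. n0 \<le> n \<Longrightarrow> \<bar>S n x\<bar> \<le> 3 * (1 / real (Suc j)) * aa n"
        using H[rule_format, of j] unfolding eventually_sequentially by blast
      show "\<exists>no. \<forall>n\<ge>no. norm ((\<Sum>i\<in>{1..n} - Jk n. \<xi> i x) / (real n powr (1/2) * ln (real n) powr (1/2 + \<epsilon>)) - 0) < r"
      proof (intro exI allI impI)
        fix n assume n: "max n0 2 \<le> n"
        have ap: "0 < aa n" using aa_pos n by simp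
        have "\<bar>S n x\<bar> / aa n \<le> 3 * (1 / real (Suc j))"
          using n0[of n] n ap by (simp add: divide_le_eq)
        then have "\<bar>S n x\<bar> / aa n < r" using j by linarith
        then show "norm ((\<Sum>i\<in>{1..n} - Jk n. \<xi> i x) / (real n powr (1/2) * ln (real n) powr (1/2 + \<epsilon>)) - 0) < r"
          by (simp add: S_def A_def aa_def abs_divide)
      qed
    qed
  qed
qed
end
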